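(* Let $n\ge4$ and let $\mathcal{L}=\{\ell_1,\ldots,\ell_n\}$ be the set of lines of the matroid $L_n$. A partition $\mathcal{Q}=\{Q_1,\ldots,Q_k\}$ of $\mathcal{L}$ is nice if and only if $|Q_i|\notin\{2,3,n-1\}$ for every $i\in[k]$.
   Context: $L_n$ ($n\ge4$) is the rank-three paving matroid on the set of 2-element subsets of $[n]$ (the pairwise intersection points of $n$ general lines in $\mathbb{P}^2$) whose lines (dependent hyperplanes) are $\ell_i=\{\{i,j\}:j\ne i\}$, $i\in[n]$; circuits are 3-subsets of some $\ell_i$ and 4-subsets containing no such 3-subset. For a set $Q$ of at least two lines, $L_n^Q$ is the rank-three paving matroid on $\bigcup_{\ell\in Q}\ell$ whose set of lines is exactly $Q$. Circuit variety of a matroid $N$ on $E$: tuples $(\gamma_e)$ in $\mathbb{C}^3$ with $(\gamma_e)_{e\in S}$ linearly dependent for every dependent $S$. $N$ is liftable if for every tuple $(\gamma_e)$ in $\mathbb{C}^3$ spanning a plane $H$ and every $q\notin H$ there exist scalars $z_e$ with $(\gamma_e+z_eq)$ in the circuit variety of $N$ and not all in a common plane. A partition $\mathcal{Q}$ of $\mathcal{L}$ is nice if (i) $L_n^{Q_i}$ is not liftable for every $i$ with $|Q_i|\ge2$, and (ii) there is no $i$ and line $\ell\notin Q_i$ with $\ell\subseteq\bigcup_{\ell'\in Q_i}\ell'$. *)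

theory Defs
  imports "HOL-Analysis.Analysis" "HOL-Library.Disjoint_Sets"
begin

type_synonym cvec = "complex ^ 3"

definition Lline :: "nat \<Rightarrow> nat \<Rightarrow> nat set set" where
  "Lline n i = {{i, j} | j. j \<in> {1..n} \<and> j \<noteq> i}"

definition Llines :: "nat \<Rightarrow> nat set set set" where
  "Llines n = Lline n ` {1..n}"

definition paving3_circuits :: "'a set \<Rightarrow> 'a set set \<Rightarrow> 'a set set" where
  "paving3_circuits E Ls =
     {C. C \<subseteq> E \<and>
        ((card C = 3 \<and> (\<exists>l\<in>Ls. C \<subseteq> l)) \<or>
         (card C = 4 \<and> \<not> (\<exists>D. D \<subseteq> C \<and> card D = 3 \<and> (\<exists>l\<in>Ls. D \<subseteq> l))))}"

definition paving3_dependent :: "'a set \<Rightarrow> 'a set set \<Rightarrow> 'a set \<Rightarrow> bool" where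
  "paving3_dependent E Ls S \<longleftrightarrow> S \<subseteq> E \<and> (\<exists>C\<in>paving3_circuits E Ls. C \<subseteq> S)"

definition lin_dep_family :: "('a \<Rightarrow> cvec) \<Rightarrow> 'a set \<Rightarrow> bool" where
  "lin_dep_family \<gamma> S \<longleftrightarrow>
     (\<exists>c :: 'a \<Rightarrow> complex. (\<exists>e\<in>S. c e \<noteq> 0) \<and> (\<Sum>e\<in>S. c e *s \<gamma> e) = 0)"

definition circuit_variety :: "'a set \<Rightarrow> ('a set \<Rightarrow> bool) \<Rightarrow> ('a \<Rightarrow> cvec) set" where
  "circuit_variety E dep = {\<gamma>. \<forall>S. S \<subseteq> E \<longrightarrow> dep S \<longrightarrow> lin_dep_family \<gamma> S}"

definition is_plane :: "cvec set \<Rightarrow> bool" where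
  "is_plane H \<longleftrightarrow> vec.subspace H \<and> vec.dim H = 2"

definition liftable :: "'a set \<Rightarrow> ('a set \<Rightarrow> bool) \<Rightarrow> bool" where
  "liftable E dep \<longleftrightarrow>
     (\<forall>(\<gamma> :: 'a \<Rightarrow> cvec) H q.
        is_plane H \<longrightarrow> vec.span (\<gamma> ` E) = H \<longrightarrow> q \<notin> H \<longrightarrow>
        (\<exists>z :: 'a \<Rightarrow> complex.
            (\<lambda>e. \<gamma> e + z e *s q) \<in> circuit_variety E dep \<and>
            \<not> (\<exists>H'. is_plane H' \<and> (\<lambda>e. \<gamma> e + z e *s q) ` E \<subseteq> H')))"

definition LnQ_ground :: "nat set set set \<Rightarrow> nat set set" where
  "LnQ_ground Q = \<Union>Q"

definition LnQ_dependent :: "nat set set set \<Rightarrow> nat set set \<Rightarrow> bool" where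
  "LnQ_dependent Q = paving3_dependent (\<Union>Q) Q"

definition nice :: "nat \<Rightarrow> nat set set set set \<Rightarrow> bool" where
  "nice n \<Q> \<longleftrightarrow>
     (\<forall>Q\<in>\<Q>. card Q \<ge> 2 \<longrightarrow> \<not> liftable (LnQ_ground Q) (LnQ_dependent Q)) \<and>
     \<not> (\<exists>Q\<in>\<Q>. \<exists>l\<in>Llines n. l \<notin> Q \<and> l \<subseteq> \<Union>Q)"

end

theory Submission
  imports Defs
begin

lemma lin_dep_mono:
  assumes "finite T" "S \<subseteq> T" "lin_dep_family g S"
  shows "lin_dep_family g T"
proof -
  from assms(3) obtain c where c: "\<exists>e\<in>S. c e \<noteq> 0" "(\<Sum>e\<in>S. c e *s g e) = 0"
    unfolding lin_dep_family_def by blast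
  define d where "d e = (if e \<in> S then c e else 0)" for e
  have "(\<Sum>e\<in>T. d e *s g e) = (\<Sum>e\<in>S. d e *s g e)"
    by (rule sum.mono_neutral_right[OF assms(1,2)]) (auto simp: d_def)
  also have "\<dots> = (\<Sum>e\<in>S. c e *s g e)" by (rule sum.cong) (auto simp: d_def)
  finally show ?thesis using c assms(2) unfolding lin_dep_family_def
    by (intro exI[of _ d]) (auto simp: d_def)
qed

lemma lin_dep_of_dim:
  fixes g :: "'a \<Rightarrow> cvec"
  assumes fin: "finite S" and sub: "g ` S \<subseteq> V" and lt: "vec.dim V < card S"
  shows "lin_dep_family g S"
proof (cases "inj_on g S")
  case True
  then have cs: "card (g`S) = card S" by (simp add: card_image)
  have "vec.dependent (g ` S)"
  proof (rule ccontr)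
    assume "\<not> vec.dependent (g`S)"
    then have "card (g`S) \<le> vec.dim V" using vec.independent_card_le_dim sub by blast
    with cs lt show False by simp
  qed
  then obtain u where u: "\<exists>v\<in>g`S. u v \<noteq> 0" "(\<Sum>v\<in>g`S. u v *s v) = 0"
    using vec.dependent_finite[of "g`S"] fin by auto
  define c where "c e = u (g e)" for e
  have "(\<Sum>e\<in>S. c e *s g e) = (\<Sum>v\<in>g`S. u v *s v)"
    using sum.reindex[OF True, of "\<lambda>v. u v *s v"] by (simp add: c_def)
  then show ?thesis using u unfolding lin_dep_family_def c_def
    by (intro exI[of _ c]) (auto simp: c_def)
next
  case False
  then obtain e1 e2 where e: "e1 \<in> S" "e2 \<in> S" "e1 \<noteq> e2" "g e1 = g e2"
    unfolding inj_on_def by blast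
  define c where "c e = (if e = e1 then 1 else if e = e2 then -1 else (0::complex))" for e
  have "(\<Sum>e\<in>S. c e *s g e) = (\<Sum>e\<in>{e1,e2}. c e *s g e)"
    by (rule sum.mono_neutral_right[OF fin]) (use e in \<open>auto simp: c_def\<close>)
  also have "\<dots> = 0" using e by (simp add: c_def)
  finally show ?thesis unfolding lin_dep_family_def using e
    by (intro exI[of _ c]) (auto simp: c_def)
qed

lemma dim_le3: "vec.dim (V::cvec set) \<le> 3"
  using dim_subset_UNIV_cart_gen[of V] by simp

lemma circuit_var_paving:
  fixes g :: "'a \<Rightarrow> cvec"
  assumes fin: "finite E" and QE: "\<forall>l\<in>Q. l \<subseteq> E"
    and lines: "\<forall>l\<in>Q. \<exists>V. vec.dim V \<le> 2 \<and> g ` l \<subseteq> V"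
  shows "g \<in> circuit_variety E (paving3_dependent E Q)"
  unfolding circuit_variety_def
proof (intro CollectI allI impI)
  fix S assume SE: "S \<subseteq> E" and dep: "paving3_dependent E Q S"
  then obtain C where C: "C \<in> paving3_circuits E Q" "C \<subseteq> S"
    unfolding paving3_dependent_def by blast
  have finS: "finite S" using SE fin finite_subset by blast
  have finC: "finite C" using C(2) finS finite_subset by blast
  have "lin_dep_family g C"
  proof -
    from C(1) have "(card C = 3 \<and> (\<exists>l\<in>Q. C \<subseteq> l)) \<or> card C = 4"
      unfolding paving3_circuits_def by blast
    then show ?thesis
    proof
      assume "card C = 3 \<and> (\<exists>l\<in>Q. C \<subseteq> l)"
      then obtain l V where "card C = 3" "l \<in> Q" "C \<subseteq> l" "vec.dim V \<le> 2" "g ` l \<subseteq> V"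
        using lines by blast
      then show ?thesis by (intro lin_dep_of_dim[OF finC, of g V]) auto
    next
      assume "card C = 4"
      then show ?thesis using dim_le3[of UNIV] by (intro lin_dep_of_dim[OF finC, of g UNIV]) auto
    qed
  qed
  then show "lin_dep_family g S" using lin_dep_mono finS C(2) by blast
qed

lemma key_lift:
  fixes \<gamma> :: "'a \<Rightarrow> cvec" and Q :: "'a set set"
  assumes fin: "finite E" and QE: "\<forall>l\<in>Q. l \<subseteq> E"
   and Hp: "is_plane H" and Hs: "vec.span (\<gamma> ` E) = H" and qH: "q \<notin> H"
   and L: "\<forall>e\<in>E. L e - \<gamma> e \<in> vec.span {q}"
   and lines: "\<forall>l\<in>Q. \<exists>V. vec.dim V \<le> 2 \<and> L ` l \<subseteq> V"
   and qin: "q \<in> vec.span (L ` E)"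
  shows "\<exists>z. (\<lambda>e. \<gamma> e + z e *s q) \<in> circuit_variety E (paving3_dependent E Q) \<and>
            \<not> (\<exists>H'. is_plane H' \<and> (\<lambda>e. \<gamma> e + z e *s q) ` E \<subseteq> H')"
proof -
  define z where "z e = (SOME k. L e - \<gamma> e = k *s q)" for e
  have Lz: "\<gamma> e + z e *s q = L e" if "e \<in> E" for e
  proof -
    have "L e - \<gamma> e \<in> range (\<lambda>k. k *s q)" using L that vec.span_singleton by auto
    then have "\<exists>k. L e - \<gamma> e = k *s q" by auto
    then have "L e - \<gamma> e = z e *s q" unfolding z_def by (rule someI_ex)
    then show ?thesis by (simp add: algebra_simps)
  qed
  have img: "(\<lambda>e. \<gamma> e + z e *s q) ` l = L ` l" if "l \<subseteq> E" for l
    using Lz that by (auto intro!: image_cong)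
  have cv: "(\<lambda>e. \<gamma> e + z e *s q) \<in> circuit_variety E (paving3_dependent E Q)"
    by (rule circuit_var_paving[OF fin QE]) (use lines QE img in auto)
  have np: "\<not> (\<exists>H'. is_plane H' \<and> (\<lambda>e. \<gamma> e + z e *s q) ` E \<subseteq> H')"
  proof
    assume "\<exists>H'. is_plane H' \<and> (\<lambda>e. \<gamma> e + z e *s q) ` E \<subseteq> H'"
    then obtain H' where H': "is_plane H'" "L ` E \<subseteq> H'" using img by auto
    have sH': "vec.span (L ` E) \<subseteq> H'"
      using H' unfolding is_plane_def by (metis vec.span_minimal)
    have sq: "vec.span {q} \<subseteq> vec.span (L ` E)"
      using qin vec.span_minimal[of "{q}" "vec.span (L ` E)"] by simp
    have "\<gamma> ` E \<subseteq> vec.span (L ` E)"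
    proof
      fix x assume "x \<in> \<gamma> ` E"
      then obtain e where e: "e \<in> E" "x = \<gamma> e" by auto
      have a: "L e \<in> vec.span (L ` E)" using e by (auto intro: vec.span_base)
      have b: "L e - \<gamma> e \<in> vec.span (L ` E)" using e L sq by auto
      have "L e - (L e - \<gamma> e) \<in> vec.span (L ` E)" by (rule vec.span_diff[OF a b])
      then show "x \<in> vec.span (L ` E)" using e by simp
    qed
    then have "H \<subseteq> vec.span (L ` E)" using Hs by (metis vec.span_minimal vec.subspace_span)
    then have "insert q H \<subseteq> H'" using sH' qin by auto
    then have "vec.dim (insert q H) \<le> vec.dim H'" by (rule vec.dim_subset)
    moreover have "q \<notin> vec.span H" using qH Hp vec.span_eq_iff unfolding is_plane_def by blast
    then have "vec.dim (insert q H) = 3" using Hp unfolding is_plane_def by (simp add: vec.dim_insert)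
    ultimately show False using H' unfolding is_plane_def by simp
  qed
  show ?thesis using cv np by blast
qed

lemma sub_ab: "vec.subspace {v::cvec. v$3 = \<alpha> * v$1 + \<beta> * v$2}"
  unfolding vec.subspace_def
proof (intro conjI ballI allI)
  show "0 \<in> {v::cvec. v$3 = \<alpha> * v$1 + \<beta> * v$2}" by simp
next
  fix x y :: cvec assume "x \<in> {v::cvec. v$3 = \<alpha> * v$1 + \<beta> * v$2}" "y \<in> {v::cvec. v$3 = \<alpha> * v$1 + \<beta> * v$2}"
  then have a: "x$3 = \<alpha> * x$1 + \<beta> * x$2" and b: "y$3 = \<alpha> * y$1 + \<beta> * y$2" by auto
  have "(x+y)$3 = \<alpha> * (x+y)$1 + \<beta> * (x+y)$2" unfolding vector_add_component a b by algebra
  then show "x + y \<in> {v::cvec. v$3 = \<alpha> * v$1 + \<beta> * v$2}" by simp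
next
  fix c and x :: cvec assume "x \<in> {v::cvec. v$3 = \<alpha> * v$1 + \<beta> * v$2}"
  then have a: "x$3 = \<alpha> * x$1 + \<beta> * x$2" by auto
  have "(c *s x)$3 = \<alpha> * (c *s x)$1 + \<beta> * (c *s x)$2" unfolding vector_smult_component a by algebra
  then show "c *s x \<in> {v::cvec. v$3 = \<alpha> * v$1 + \<beta> * v$2}" by simp
qed

lemma plane_ab: "is_plane {v::cvec. v$3 = \<alpha> * v$1 + \<beta> * v$2}" (is "is_plane ?P")
proof -
  have sub: "vec.subspace ?P"
    by (rule sub_ab)
  define u :: cvec where "u = vector [1, 0, \<alpha>]"
  define w :: cvec where "w = vector [0, 1, \<beta>]"
  have uP: "u \<in> ?P" and wP: "w \<in> ?P" by (simp_all add: u_def w_def)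
  have "w $ 2 = 1" by (simp add: w_def)
  then have w0: "w \<noteq> 0" by auto
  have uw: "u \<notin> vec.span {w}"
  proof
    assume "u \<in> vec.span {w}"
    then obtain k where "u = k *s w" using vec.span_singleton by auto
    then have "u $ 1 = (k *s w) $ 1" by simp
    then show False by (simp add: u_def w_def)
  qed
  have ind: "vec.independent {u, w}"
    using uw w0 by (simp add: vec.independent_insert)
  have uw_ne: "u \<noteq> w" using uw vec.span_base by blast
  have "card {u,w} \<le> vec.dim ?P"
    using vec.independent_card_le_dim[of "{u,w}" ?P] uP wP ind by blast
  then have "2 \<le> vec.dim ?P" using uw_ne by simp
  moreover have "vec.dim ?P < 3"
  proof -
    have "(vector [0,0,1] :: cvec) \<notin> ?P" by simp
    then have ne: "?P \<noteq> UNIV" by (metis UNIV_I)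
    have sp: "vec.span ?P = ?P" by (rule vec.span_eq_iff[THEN iffD2, OF sub])
    have "vec.span ?P \<subset> vec.span (UNIV :: cvec set)" unfolding sp vec.span_UNIV using ne by (rule psubsetI[OF subset_UNIV])
    then have "vec.dim ?P < vec.dim (UNIV :: cvec set)" by (rule vec.dim_psubset)
    moreover have "vec.dim (UNIV :: cvec set) = CARD(3)" by (rule vec_dim_card)
    ultimately show ?thesis by simp
  qed
  ultimately show ?thesis unfolding is_plane_def using sub by simp
qed

lemma vec3_lift: "vector [a, b, 0] + k *s vector [0, 0, 1] = (vector [a, b, k] :: cvec)"
  by (simp add: vec_eq_iff forall_3)

lemma det_of_dep:
  fixes x z :: "'a \<Rightarrow> complex"
  assumes dep: "lin_dep_family (\<lambda>e. vector [x e, 1, z e] :: cvec) {e1, e2, e3}"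
    and d: "e1 \<noteq> e2" "e1 \<noteq> e3" "e2 \<noteq> e3"
  shows "(x e2 - x e1) * (z e3 - z e1) = (x e3 - x e1) * (z e2 - z e1)"
proof -
  from dep obtain c where c: "\<exists>e\<in>{e1,e2,e3}. c e \<noteq> 0"
    "(\<Sum>e\<in>{e1,e2,e3}. c e *s (vector [x e, 1, z e] :: cvec)) = 0"
    unfolding lin_dep_family_def by blast
  have s: "(\<Sum>e\<in>{e1,e2,e3}. c e *s (vector [x e, 1, z e] :: cvec)) =
     c e1 *s vector [x e1, 1, z e1] + c e2 *s vector [x e2, 1, z e2] + c e3 *s vector [x e3, 1, z e3]"
    using d by (simp add: add.assoc)
  have "(c e1 *s vector [x e1, 1, z e1] + c e2 *s vector [x e2, 1, z e2] + c e3 *s (vector [x e3, 1, z e3] :: cvec)) $ i = 0" for i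
    using c(2) s by simp
  from this[of 1] this[of 2] this[of 3]
  have h1: "c e1 * x e1 + c e2 * x e2 + c e3 * x e3 = 0"
    and h2: "c e1 + c e2 + c e3 = 0"
    and h3: "c e1 * z e1 + c e2 * z e2 + c e3 * z e3 = 0" by simp_all
  define D where "D = (x e2 - x e1) * (z e3 - z e1) - (x e3 - x e1) * (z e2 - z e1)"
  have "c e1 * D = 0" "c e2 * D = 0" "c e3 * D = 0"
    using h1 h2 h3 unfolding D_def by algebra+
  then have "D = 0" using c(1) by auto
  then show ?thesis unfolding D_def by simp
qed

lemma k4_solve:
  fixes zab zac zad zbc zbd zcd :: complex
  assumes "(1 - 0) * (zad - zab) = (2 - 0) * (zac - zab)"
    and "(3 - 0) * (zbd - zab) = (4 - 0) * (zbc - zab)"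
    and "(3 - 1) * (zcd - zac) = (6 - 1) * (zbc - zac)"
    and "(4 - 2) * (zcd - zad) = (6 - 2) * (zbd - zad)"
  shows "zad = (zac - zab) * 2 + zab" "zbc = (zac - zab) * 3 + zab"
    "zbd = (zac - zab) * 4 + zab" "zcd = (zac - zab) * 6 + zab"
  using assms by algebra+

lemma propag:
  fixes x1 x2 x3 z1 z2 z3 \<alpha> \<beta> :: complex
  assumes "(x2 - x1) * (z3 - z1) = (x3 - x1) * (z2 - z1)"
    "z1 = \<alpha> * x1 + \<beta>" "z2 = \<alpha> * x2 + \<beta>" "x1 \<noteq> x2"
  shows "z3 = \<alpha> * x3 + \<beta>"
proof -
  have "(x2 - x1) * (z3 - (\<alpha> * x3 + \<beta>)) = 0" using assms(1-3) by algebra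
  then show ?thesis using assms(4) by simp
qed

lemma Lline_mem: "e \<in> Lline n i \<longleftrightarrow> (\<exists>j. e = {i,j} \<and> j \<in> {1..n} \<and> j \<noteq> i)"
  by (auto simp: Lline_def)

lemma pair_in_Lline: "j \<in> {1..n} \<Longrightarrow> j \<noteq> i \<Longrightarrow> {i,j} \<in> Lline n i"
  by (auto simp: Lline_def)

lemma pair_in_Lline': "j \<in> {1..n} \<Longrightarrow> j \<noteq> i \<Longrightarrow> {j,i} \<in> Lline n i"
  by (auto simp: Lline_def insert_commute)

lemma cv_triple:
  assumes g: "g \<in> circuit_variety (\<Union>Q) (paving3_dependent (\<Union>Q) Q)"
    and l: "l \<in> Q" "e1 \<in> l" "e2 \<in> l" "e3 \<in> l"
    and d: "e1 \<noteq> e2" "e1 \<noteq> e3" "e2 \<noteq> e3"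
  shows "lin_dep_family g {e1,e2,e3}"
proof -
  have sub: "{e1,e2,e3} \<subseteq> \<Union>Q" using l by auto
  have "card {e1,e2,e3} = 3" using d by simp
  then have "{e1,e2,e3} \<in> paving3_circuits (\<Union>Q) Q"
    unfolding paving3_circuits_def using sub l by blast
  then have "paving3_dependent (\<Union>Q) Q {e1,e2,e3}"
    unfolding paving3_dependent_def using sub by blast
  then show ?thesis using g sub unfolding circuit_variety_def by blast
qed

definition xk4 :: "nat \<Rightarrow> nat \<Rightarrow> nat \<Rightarrow> nat \<Rightarrow> nat set \<Rightarrow> complex" where
  "xk4 a b c d e = (if e = {a,b} then 0 else if e = {a,c} then 1 else if e = {a,d} then 2
     else if e = {b,c} then 3 else if e = {b,d} then 4 else if e = {c,d} then 6
     else if a \<in> e then 10 else 11)"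

lemma xk4_vals:
  assumes "distinct [a,b,c,d]"
  shows "xk4 a b c d {a,b} = 0" "xk4 a b c d {a,c} = 1" "xk4 a b c d {a,d} = 2"
    "xk4 a b c d {b,c} = 3" "xk4 a b c d {b,d} = 4" "xk4 a b c d {c,d} = 6"
    "i \<notin> {a,b,c,d} \<Longrightarrow> xk4 a b c d {i,a} = 10"
    "i \<notin> {a,b,c,d} \<Longrightarrow> xk4 a b c d {i,b} = 11"
  using assms by (auto simp: xk4_def doubleton_eq_iff)

lemma not_liftable_ge4:
  assumes I: "I \<subseteq> {1..n}" and abcd: "a \<in> I" "b \<in> I" "c \<in> I" "d \<in> I" and dist: "distinct [a,b,c,d]"
  shows "\<not> liftable (LnQ_ground (Lline n ` I)) (LnQ_dependent (Lline n ` I))"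
proof
  let ?Q = "Lline n ` I"
  let ?E = "\<Union>?Q"
  let ?x = "xk4 a b c d"
  define \<gamma> :: "nat set \<Rightarrow> cvec" where "\<gamma> e = vector [?x e, 1, 0]" for e
  define H :: "cvec set" where "H = {v. v$3 = 0 * v$1 + 0 * v$2}"
  define q :: cvec where "q = vector [0,0,1]"
  assume "liftable (LnQ_ground ?Q) (LnQ_dependent ?Q)"
  then have lift: "\<And>\<gamma> H q. is_plane H \<Longrightarrow> vec.span (\<gamma> ` ?E) = H \<Longrightarrow> q \<notin> H \<Longrightarrow>
        (\<exists>z :: nat set \<Rightarrow> complex.
            (\<lambda>e. \<gamma> e + z e *s q) \<in> circuit_variety ?E (paving3_dependent ?E ?Q) \<and>
            \<not> (\<exists>H'. is_plane H' \<and> (\<lambda>e. \<gamma> e + z e *s q) ` ?E \<subseteq> H'))"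
    unfolding liftable_def LnQ_ground_def LnQ_dependent_def by blast
  have abcdn: "a \<in> {1..n}" "b \<in> {1..n}" "c \<in> {1..n}" "d \<in> {1..n}" using I abcd by auto
  have "{a,b} \<in> Lline n a" "{a,c} \<in> Lline n a" using abcdn dist by (auto intro!: pair_in_Lline)
  then have ab: "{a,b} \<in> ?E" and ac: "{a,c} \<in> ?E" using abcd by auto
  have Hp: "is_plane H" unfolding H_def by (rule plane_ab)
  have qH: "q \<notin> H" unfolding H_def q_def by simp
  have sp: "vec.span (\<gamma> ` ?E) = H"
  proof
    have "\<gamma> ` ?E \<subseteq> H" unfolding H_def \<gamma>_def by auto
    then show "vec.span (\<gamma> ` ?E) \<subseteq> H" using Hp unfolding is_plane_def by (metis vec.span_minimal)
  next
    show "H \<subseteq> vec.span (\<gamma> ` ?E)"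
    proof
      fix v assume "v \<in> H"
      then have v3: "v$3 = 0" unfolding H_def by simp
      have g1: "\<gamma> {a,b} = vector [0,1,0]" "\<gamma> {a,c} = vector [1,1,0]"
        unfolding \<gamma>_def using xk4_vals[OF dist] by simp_all
      have "v = (v$1) *s \<gamma> {a,c} + (v$2 - v$1) *s \<gamma> {a,b}"
        unfolding g1 using v3 by (simp add: vec_eq_iff forall_3)
      moreover have "(v$1) *s \<gamma> {a,c} + (v$2 - v$1) *s \<gamma> {a,b} \<in> vec.span (\<gamma> ` ?E)"
        using ab ac by (intro vec.span_add vec.span_scale vec.span_base) auto
      ultimately show "v \<in> vec.span (\<gamma> ` ?E)" by simp
    qed
  qed
  obtain z where z: "(\<lambda>e. \<gamma> e + z e *s q) \<in> circuit_variety ?E (paving3_dependent ?E ?Q)"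
    and np: "\<not> (\<exists>H'. is_plane H' \<and> (\<lambda>e. \<gamma> e + z e *s q) ` ?E \<subseteq> H')"
    using lift[OF Hp sp qH] by blast
  have geq: "(\<lambda>e. \<gamma> e + z e *s q) = (\<lambda>e. vector [?x e, 1, z e])"
    unfolding \<gamma>_def q_def by (simp add: vec3_lift)
  have cv: "(\<lambda>e. vector [?x e, 1, z e] :: cvec) \<in> circuit_variety ?E (paving3_dependent ?E ?Q)"
    using z geq by simp
  have D: "(?x e2 - ?x e1) * (z e3 - z e1) = (?x e3 - ?x e1) * (z e2 - z e1)"
    if "t \<in> I" "e1 \<in> Lline n t" "e2 \<in> Lline n t" "e3 \<in> Lline n t"
       "e1 \<noteq> e2" "e1 \<noteq> e3" "e2 \<noteq> e3" for t e1 e2 e3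
    by (rule det_of_dep[OF cv_triple[OF cv]]) (use that in auto)
  define \<alpha> where "\<alpha> = z {a,c} - z {a,b}"
  define \<beta> where "\<beta> = z {a,b}"
  let ?good = "\<lambda>e. z e = \<alpha> * ?x e + \<beta>"
  note xv = xk4_vals[OF dist]
  have inL: "{i,j} \<in> Lline n i" "{j,i} \<in> Lline n i" if "i \<in> {a,b,c,d}" "j \<in> {a,b,c,d}" "i \<noteq> j" for i j
    using that abcdn by (auto intro!: pair_in_Lline pair_in_Lline')
  have ne: "{a,b} \<noteq> {a,c}" "{a,b} \<noteq> {a,d}" "{a,c} \<noteq> {a,d}" "{a,b} \<noteq> {b,c}" "{a,b} \<noteq> {b,d}"
    "{b,c} \<noteq> {b,d}" "{a,c} \<noteq> {b,c}" "{a,c} \<noteq> {c,d}" "{b,c} \<noteq> {c,d}"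
    "{a,d} \<noteq> {b,d}" "{a,d} \<noteq> {c,d}" "{b,d} \<noteq> {c,d}"
    using dist by (auto simp: doubleton_eq_iff)
  have Da: "(1 - 0) * (z {a,d} - z {a,b}) = (2 - 0) * (z {a,c} - z {a,b})"
    using D[of a "{a,b}" "{a,c}" "{a,d}"] abcd inL ne xv dist by simp
  have Db: "(3 - 0) * (z {b,d} - z {a,b}) = (4 - 0) * (z {b,c} - z {a,b})"
    using D[of b "{a,b}" "{b,c}" "{b,d}"] abcd inL ne xv dist by simp
  have Dc: "(3 - 1) * (z {c,d} - z {a,c}) = (6 - 1) * (z {b,c} - z {a,c})"
    using D[of c "{a,c}" "{b,c}" "{c,d}"] abcd inL ne xv dist by simp
  have Dd: "(4 - 2) * (z {c,d} - z {a,d}) = (6 - 2) * (z {b,d} - z {a,d})"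
    using D[of d "{a,d}" "{b,d}" "{c,d}"] abcd inL ne xv dist by simp
  note K = k4_solve[OF Da Db Dc Dd]
  have gk: "?good {a,b}" "?good {a,c}" "?good {a,d}" "?good {b,c}" "?good {b,d}" "?good {c,d}"
    using K xv unfolding \<alpha>_def \<beta>_def by (simp_all add: mult.commute)
  have step: "?good e" if "t \<in> I" "e1 \<in> Lline n t" "e2 \<in> Lline n t" "e \<in> Lline n t"
     "e1 \<noteq> e2" "?good e1" "?good e2" "?x e1 \<noteq> ?x e2" for t e1 e2 e
  proof (cases "e = e1 \<or> e = e2")
    case True then show ?thesis using that by auto
  next
    case False
    then show ?thesis
      using propag[OF D[OF that(1-4)] that(6,7,8)] that(5) by auto
  qed
  have step1: "?good e" if "t \<in> {a,b,c,d}" "e \<in> Lline n t" for t e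
  proof -
    have "t = a \<or> t = b \<or> t = c \<or> t = d" using that by auto
    then show ?thesis
    proof (elim disjE)
      assume t: "t = a"
      show ?thesis by (rule step[of a "{a,b}" "{a,c}"]) (use t that abcd inL ne xv gk dist in auto)
    next
      assume t: "t = b"
      show ?thesis by (rule step[of b "{a,b}" "{b,c}"]) (use t that abcd inL ne xv gk dist in auto)
    next
      assume t: "t = c"
      show ?thesis by (rule step[of c "{a,c}" "{b,c}"]) (use t that abcd inL ne xv gk dist in auto)
    next
      assume t: "t = d"
      show ?thesis by (rule step[of d "{a,d}" "{b,d}"]) (use t that abcd inL ne xv gk dist in auto)
    qed
  qed
  have allgood: "?good e" if "e \<in> ?E" for e
  proof -
    from that obtain i where i: "i \<in> I" "e \<in> Lline n i" by auto
    show ?thesis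
    proof (cases "i \<in> {a,b,c,d}")
      case True then show ?thesis using step1 i by blast
    next
      case False
      have iI: "i \<in> {1..n}" using i I by auto
      have ia: "{i,a} \<in> Lline n a" "{i,b} \<in> Lline n b" using iI False by (auto intro!: pair_in_Lline')
      have ia2: "{i,a} \<in> Lline n i" "{i,b} \<in> Lline n i" using abcdn dist False by (auto intro!: pair_in_Lline)
      have g2: "?good {i,a}" "?good {i,b}" using step1 ia by auto
      have "{i,a} \<noteq> {i,b}" using dist by (auto simp: doubleton_eq_iff)
      then show ?thesis
        by (rule step[OF i(1) ia2 i(2) _ g2]) (use xv False in simp)
    qed
  qed
  have "is_plane {v::cvec. v$3 = \<alpha> * v$1 + \<beta> * v$2}" by (rule plane_ab)
  moreover have "(\<lambda>e. \<gamma> e + z e *s q) ` ?E \<subseteq> {v::cvec. v$3 = \<alpha> * v$1 + \<beta> * v$2}"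
    unfolding geq using allgood by auto
  ultimately show False using np by blast
qed

definition WIT :: "'a set set \<Rightarrow> ('a \<Rightarrow> cvec) \<Rightarrow> cvec \<Rightarrow> bool" where
  "WIT Q \<gamma> q \<longleftrightarrow> (\<exists>z. (\<lambda>e. \<gamma> e + z e *s q) \<in> circuit_variety (\<Union>Q) (paving3_dependent (\<Union>Q) Q) \<and>
            \<not> (\<exists>H'. is_plane H' \<and> (\<lambda>e. \<gamma> e + z e *s q) ` (\<Union>Q) \<subseteq> H'))"

definition FF :: "'a set set \<Rightarrow> 'a set \<Rightarrow> 'a set" where
  "FF Q l = l - \<Union>(Q - {l})"

locale liftsetup =
  fixes Q :: "'a set set" and \<gamma> :: "'a \<Rightarrow> cvec" and H :: "cvec set" and q :: cvec
  assumes fin: "finite (\<Union>Q)"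
    and Hp: "is_plane H" and Hs: "vec.span (\<gamma> ` \<Union>Q) = H" and qH: "q \<notin> H"
begin

abbreviation "E \<equiv> \<Union>Q"

lemma gH: "e \<in> E \<Longrightarrow> \<gamma> e \<in> H"
  using Hs vec.span_base[of "\<gamma> e" "\<gamma> ` E"] by auto

lemma Hsub: "vec.subspace H" using Hp unfolding is_plane_def by simp
lemma Hdim: "vec.dim H = 2" using Hp unfolding is_plane_def by simp

lemma key:
  assumes L: "\<forall>e\<in>E. L e - \<gamma> e \<in> vec.span {q}"
   and lines: "\<forall>l\<in>Q. \<exists>V. vec.dim V \<le> 2 \<and> L ` l \<subseteq> V"
   and qin: "q \<in> vec.span (L ` E)"
  shows "WIT Q \<gamma> q"
  unfolding WIT_def
  by (rule key_lift[OF fin _ Hp Hs qH L lines qin]) auto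

lemma T1:
  assumes l: "l \<in> Q" "f0 \<in> l" "f0 \<notin> \<Union>(Q - {l})"
    and m: "\<gamma> ` (l - {f0}) \<subseteq> vec.span {m}"
    and f0s: "\<gamma> f0 \<in> vec.span (\<gamma> ` (E - {f0}))"
  shows "WIT Q \<gamma> q"
proof -
  define L where "L e = (if e = f0 then \<gamma> e + q else \<gamma> e)" for e
  show ?thesis
  proof (rule key)
    show "\<forall>e\<in>E. L e - \<gamma> e \<in> vec.span {q}"
      by (auto simp: L_def vec.span_base vec.span_zero)
    show "\<forall>l'\<in>Q. \<exists>V. vec.dim V \<le> 2 \<and> L ` l' \<subseteq> V"
    proof
      fix l' assume l': "l' \<in> Q"
      show "\<exists>V. vec.dim V \<le> 2 \<and> L ` l' \<subseteq> V"
      proof (cases "l' = l")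
        case True
        let ?V = "vec.span {m, \<gamma> f0 + q}"
        have "vec.dim ?V \<le> card {m, \<gamma> f0 + q}" by (rule vec.dim_le_card) auto
        also have "\<dots> \<le> 2" by (simp add: card_insert_le_m1)
        finally have d: "vec.dim ?V \<le> 2" .
        have "L ` l' \<subseteq> ?V"
        proof
          fix y assume "y \<in> L ` l'"
          then obtain e where e: "e \<in> l" "y = L e" using True by auto
          show "y \<in> ?V"
          proof (cases "e = f0")
            case True then show ?thesis using e by (simp add: L_def vec.span_base)
          next
            case False
            then have "\<gamma> e \<in> vec.span {m}" using m e by auto
            then have "\<gamma> e \<in> ?V" using vec.span_mono[of "{m}" "{m, \<gamma> f0 + q}"] by auto
            then show ?thesis using e False by (simp add: L_def)
          qed
        qed
        then show ?thesis using d by blast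
      next
        case False
        then have "f0 \<notin> l'" using l l' by auto
        then have "L ` l' \<subseteq> H" using gH l' by (auto simp: L_def)
        then show ?thesis using Hdim by (intro exI[of _ H]) simp
      qed
    qed
    show "q \<in> vec.span (L ` E)"
    proof -
      have "\<gamma> ` (E - {f0}) = L ` (E - {f0})" by (auto simp: L_def)
      also have "\<dots> \<subseteq> L ` E" by auto
      finally have "vec.span (\<gamma> ` (E - {f0})) \<subseteq> vec.span (L ` E)" by (rule vec.span_mono)
      then have a: "\<gamma> f0 \<in> vec.span (L ` E)" using f0s by (rule subsetD)
      have "f0 \<in> E" using l by auto
      then have b: "L f0 \<in> vec.span (L ` E)" by (intro vec.span_base imageI)
      have "L f0 - \<gamma> f0 \<in> vec.span (L ` E)" by (rule vec.span_diff[OF b a])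
      then show ?thesis by (simp add: L_def)
    qed
  qed
qed

lemma T1':
  assumes l: "l \<in> Q" and f: "f1 \<in> FF Q l" "f2 \<in> FF Q l" "f1 \<noteq> f2"
    and m: "\<gamma> ` l \<subseteq> vec.span {m}"
  shows "WIT Q \<gamma> q"
proof (cases "\<gamma> f2 = 0")
  case True
  show ?thesis
    by (rule T1[OF l, of f2 m]) (use f m True in \<open>auto simp: FF_def vec.span_zero\<close>)
next
  case False
  obtain k1 where k1: "\<gamma> f1 = k1 *s m" using m f vec.span_singleton unfolding FF_def by blast
  obtain k2 where k2: "\<gamma> f2 = k2 *s m" using m f vec.span_singleton unfolding FF_def by blast
  have "k2 \<noteq> 0" using False k2 by auto
  then have "\<gamma> f1 = (k1 / k2) *s \<gamma> f2" using k1 k2 by simp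
  moreover have "\<gamma> f2 \<in> vec.span (\<gamma> ` (E - {f1}))"
    using f l by (intro vec.span_base) (auto simp: FF_def)
  ultimately have "\<gamma> f1 \<in> vec.span (\<gamma> ` (E - {f1}))" by (metis vec.span_scale)
  then show ?thesis
    by (intro T1[OF l, of f1 m]) (use f m in \<open>auto simp: FF_def\<close>)
qed

lemma ext_map:
  assumes "x \<notin> vec.span Y"
  obtains g where "Vector_Spaces.linear (*s) (*s) g" "\<And>y. y \<in> vec.span Y \<Longrightarrow> g y = 0"
    "g x = q" "\<And>v. g v \<in> vec.span {q}"
proof -
  obtain B0 where B0: "B0 \<subseteq> Y" "vec.independent B0" "Y \<subseteq> vec.span B0" "card B0 = vec.dim Y"
    by (rule vec.basis_exists)
  have spB: "vec.span Y \<subseteq> vec.span B0"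
    using B0(3) vec.span_minimal[of Y "vec.span B0"] by simp
  have spB2: "vec.span B0 \<subseteq> vec.span Y" using B0(1) by (rule vec.span_mono)
  have xB: "x \<notin> vec.span B0" using assms spB2 by auto
  then have xB0: "x \<notin> B0" using vec.span_base[of x B0] by auto
  have ind: "vec.independent (insert x B0)" using B0(2) xB xB0 by (simp add: vec.independent_insert)
  define f where "f v = (if v = x then q else 0)" for v
  obtain g where g: "Vector_Spaces.linear (*s) (*s) g" "\<forall>v\<in>insert x B0. g v = f v"
    "range g = vec.span (f ` insert x B0)"
    using vec.linear_independent_extend_subspace[OF ind, of f] by blast
  have fB: "f ` insert x B0 \<subseteq> vec.span {q}"
    by (auto simp: f_def vec.span_base vec.span_zero)
  have r: "g v \<in> vec.span {q}" for v
  proof -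
    have "g v \<in> range g" by simp
    also have "\<dots> \<subseteq> vec.span {q}" unfolding g(3) by (rule vec.span_minimal[OF fB vec.subspace_span])
    finally show ?thesis .
  qed
  have z: "g y = 0" if "y \<in> vec.span Y" for y
  proof -
    have "y \<in> vec.span B0" using spB that by (rule subsetD)
    then show ?thesis
      by (rule vec.linear_eq_0_on_span[OF g(1), rotated]) (use g(2) xB0 in \<open>auto simp: f_def\<close>)
  qed
  have "g x = q" using g(2) by (simp add: f_def)
  then show ?thesis using that g(1) z r by blast
qed

lemma T_lin:
  assumes "Vector_Spaces.linear (*s) (*s) g"
  shows "Vector_Spaces.linear (*s) (*s) (\<lambda>x. x + g x)"
  using vec.linear_compose_add[OF vec.linear_id assms] by (simp add: id_def)

lemma T_dim:
  assumes "Vector_Spaces.linear (*s) (*s) g"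
  shows "vec.dim ((\<lambda>x. x + g x) ` H) \<le> 2"
  using vec.dim_image_le[OF T_lin[OF assms], of H] Hdim by simp

lemma T2:
  assumes l: "l \<in> Q" and f0: "f0 \<in> FF Q l"
    and ns: "\<gamma> f0 \<notin> vec.span (\<gamma> ` (l - FF Q l))"
    and ins: "\<gamma> f0 \<in> vec.span (\<gamma> ` (E - FF Q l))"
  shows "WIT Q \<gamma> q"
proof -
  obtain g where g: "Vector_Spaces.linear (*s) (*s) g"
    "\<And>y. y \<in> vec.span (\<gamma> ` (l - FF Q l)) \<Longrightarrow> g y = 0"
    "g (\<gamma> f0) = q" "\<And>v. g v \<in> vec.span {q}"
    using ext_map[OF ns] by blast
  define L where "L e = (if e \<in> FF Q l then \<gamma> e + g (\<gamma> e) else \<gamma> e)" for e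
  show ?thesis
  proof (rule key)
    show "\<forall>e\<in>E. L e - \<gamma> e \<in> vec.span {q}"
      using g(4) by (auto simp: L_def vec.span_zero)
    show "\<forall>l'\<in>Q. \<exists>V. vec.dim V \<le> 2 \<and> L ` l' \<subseteq> V"
    proof
      fix l' assume l': "l' \<in> Q"
      show "\<exists>V. vec.dim V \<le> 2 \<and> L ` l' \<subseteq> V"
      proof (cases "l' = l")
        case True
        have "L ` l' \<subseteq> (\<lambda>x. x + g x) ` H"
        proof
          fix y assume "y \<in> L ` l'"
          then obtain e where e: "e \<in> l" "y = L e" using True by auto
          have eH: "\<gamma> e \<in> H" using e l gH by auto
          show "y \<in> (\<lambda>x. x + g x) ` H"
          proof (cases "e \<in> FF Q l")
            case True then show ?thesis using e eH by (auto simp: L_def)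
          next
            case False
            then have "\<gamma> e \<in> vec.span (\<gamma> ` (l - FF Q l))" using e by (intro vec.span_base) auto
            then have "g (\<gamma> e) = 0" by (rule g(2))
            then have "y = \<gamma> e + g (\<gamma> e)" using e False by (simp add: L_def)
            then show ?thesis using eH by blast
          qed
        qed
        then show ?thesis using T_dim[OF g(1)] by blast
      next
        case False
        then have "l' \<inter> FF Q l = {}" using l l' by (auto simp: FF_def)
        then have "L ` l' \<subseteq> H" using gH l' by (auto simp: L_def)
        then show ?thesis using Hdim by (intro exI[of _ H]) simp
      qed
    qed
    show "q \<in> vec.span (L ` E)"
    proof -
      have "\<gamma> ` (E - FF Q l) = L ` (E - FF Q l)" by (auto simp: L_def)
      also have "\<dots> \<subseteq> L ` E" by auto
      finally have "vec.span (\<gamma> ` (E - FF Q l)) \<subseteq> vec.span (L ` E)" by (rule vec.span_mono)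
      then have a: "\<gamma> f0 \<in> vec.span (L ` E)" using ins by (rule subsetD)
      have "f0 \<in> E" using l f0 by (auto simp: FF_def)
      then have b: "L f0 \<in> vec.span (L ` E)" by (intro vec.span_base imageI)
      have "L f0 - \<gamma> f0 \<in> vec.span (L ` E)" by (rule vec.span_diff[OF b a])
      then show ?thesis using f0 g(3) by (simp add: L_def)
    qed
  qed
qed


end

context liftsetup begin

lemma D1:
  assumes "vec.span Y \<subseteq> H" "vec.span Y \<noteq> H"
  obtains m where "Y \<subseteq> vec.span {m}"
proof -
  have sH: "vec.span H = H" using Hsub vec.span_eq_iff by blast
  have "vec.span Y \<subset> vec.span H" unfolding sH using assms by (rule psubsetI)
  then have "vec.dim Y < vec.dim H" by (rule vec.dim_psubset)
  then have d: "vec.dim Y \<le> 1" using Hdim by simp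
  obtain B where B: "B \<subseteq> Y" "vec.independent B" "Y \<subseteq> vec.span B" "card B = vec.dim Y"
    by (rule vec.basis_exists)
  have fB: "finite B" using B(2) by (rule vec.finiteI_independent)
  have "card B \<le> 1" using B(4) d by simp
  then have all: "\<forall>a\<in>B. \<forall>b\<in>B. a = b" using fB card_le_Suc0_iff_eq[OF fB] by simp
  have "B = {} \<or> (\<exists>m. B = {m})"
  proof (cases "B = {}")
    case False
    then obtain m where "m \<in> B" by blast
    then have "B = {m}" using all by blast
    then show ?thesis by blast
  qed simp
  then show ?thesis
  proof
    assume "B = {}"
    then have "Y \<subseteq> vec.span {0}" using B(3) vec.span_mono[of "{}" "{0::cvec}"] by auto
    then show ?thesis by (rule that)
  next
    assume "\<exists>m. B = {m}"
    then obtain m where "B = {m}" by blast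
    then show ?thesis using B(3) that by blast
  qed
qed

lemma LINE:
  assumes l: "l \<in> Q" and f: "f1 \<in> FF Q l" "f2 \<in> FF Q l" "f1 \<noteq> f2"
    and m0: "\<gamma> ` (l - FF Q l) \<subseteq> vec.span {m0}"
    and X: "vec.span (\<gamma> ` (E - FF Q l)) = H"
  shows "WIT Q \<gamma> q"
proof (cases "\<exists>f\<in>FF Q l. \<gamma> f \<notin> vec.span (\<gamma> ` (l - FF Q l))")
  case True
  then obtain f where f': "f \<in> FF Q l" "\<gamma> f \<notin> vec.span (\<gamma> ` (l - FF Q l))" by blast
  have "\<gamma> f \<in> H" using f' l gH by (auto simp: FF_def)
  then show ?thesis using T2[OF l f'] X by simp
next
  case False
  have sm: "vec.span (\<gamma> ` (l - FF Q l)) \<subseteq> vec.span {m0}"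
    using m0 vec.span_minimal[of _ "vec.span {m0}"] by simp
  have "\<gamma> ` l \<subseteq> vec.span {m0}"
  proof
    fix y assume "y \<in> \<gamma> ` l"
    then obtain e where e: "e \<in> l" "y = \<gamma> e" by auto
    show "y \<in> vec.span {m0}"
    proof (cases "e \<in> FF Q l")
      case True then show ?thesis using False sm e by auto
    next
      case False then show ?thesis using m0 e by auto
    qed
  qed
  then show ?thesis by (rule T1'[OF l f])
qed

lemma LINE2:
  assumes l: "l \<in> Q" and f: "f1 \<in> FF Q l" "f2 \<in> FF Q l" "f1 \<noteq> f2"
    and l': "l' \<in> Q" "l' \<noteq> l" and f': "f1' \<in> FF Q l'" "f2' \<in> FF Q l'" "f1' \<noteq> f2'"
    and m0: "\<gamma> ` (l - FF Q l) \<subseteq> vec.span {m0}"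
  shows "WIT Q \<gamma> q"
proof (cases "vec.span (\<gamma> ` (E - FF Q l)) = H")
  case True
  then show ?thesis by (rule LINE[OF l f m0])
next
  case False
  have "\<gamma> ` (E - FF Q l) \<subseteq> H" using gH by auto
  then have sub: "vec.span (\<gamma> ` (E - FF Q l)) \<subseteq> H" by (rule vec.span_minimal[OF _ Hsub])
  obtain m where m: "\<gamma> ` (E - FF Q l) \<subseteq> vec.span {m}" by (rule D1[OF sub False])
  have "l' \<subseteq> E - FF Q l" using l' l by (auto simp: FF_def)
  then have "\<gamma> ` l' \<subseteq> vec.span {m}" using m by auto
  then show ?thesis by (rule T1'[OF l'(1) f'])
qed

end

context liftsetup begin

lemma notin_span2:
  assumes "vec.span {u, v} = H"
  shows "u \<notin> vec.span {v}"
proof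
  assume u: "u \<in> vec.span {v}"
  have "{u, v} \<subseteq> vec.span {v}" using u vec.span_base[of v "{v}"] by auto
  then have "vec.span {u, v} \<subseteq> vec.span {v}" by (rule vec.span_minimal[OF _ vec.subspace_span])
  then have "vec.dim H \<le> vec.dim (vec.span {v})" using assms by (metis vec.dim_subset)
  also have "\<dots> \<le> card {v}" by (rule vec.dim_le_card) auto
  finally show False using Hdim by simp
qed

lemma T3:
  assumes Q: "Q = {la, lb, lc}"
    and iab: "la \<inter> lb = {pab}" and iac: "la \<inter> lc = {pac}" and ibc: "lb \<inter> lc = {pbc}"
    and pbc: "pbc \<notin> la"
    and s1: "vec.span {\<gamma> pab, \<gamma> pac} = H" and s2: "vec.span {\<gamma> pab, \<gamma> pbc} = H"
    and s3: "vec.span {\<gamma> pac, \<gamma> pbc} = H"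
  shows "WIT Q \<gamma> q"
proof -
  let ?u = "\<gamma> pab" and ?v = "\<gamma> pac" and ?w = "\<gamma> pbc"
  obtain ga where ga: "Vector_Spaces.linear (*s) (*s) ga"
    "\<And>y. y \<in> vec.span {?v} \<Longrightarrow> ga y = 0" "ga ?u = q" "\<And>v. ga v \<in> vec.span {q}"
    using ext_map[OF notin_span2[OF s1]] by blast
  obtain gb where gb: "Vector_Spaces.linear (*s) (*s) gb"
    "\<And>y. y \<in> vec.span {?w} \<Longrightarrow> gb y = 0" "gb ?u = q" "\<And>v. gb v \<in> vec.span {q}"
    using ext_map[OF notin_span2[OF s2]] by blast
  have gav: "ga ?v = 0" by (rule ga(2)) (simp add: vec.span_base)
  have gbw: "gb ?w = 0" by (rule gb(2)) (simp add: vec.span_base)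
  have mem: "pab \<in> la" "pab \<in> lb" "pac \<in> la" "pac \<in> lc" "pbc \<in> lb" "pbc \<in> lc"
    using iab iac ibc by auto
  define L where "L e = (if e \<in> la then \<gamma> e + ga (\<gamma> e) else if e \<in> lb then \<gamma> e + gb (\<gamma> e) else \<gamma> e)" for e
  have Lac: "L pac = ?v" using mem gav by (simp add: L_def)
  have Lbc: "L pbc = ?w" using mem gbw pbc by (simp add: L_def)
  have Lab: "L pab = ?u + q" using mem ga(3) by (simp add: L_def)
  show ?thesis
  proof (rule key)
    show "\<forall>e\<in>E. L e - \<gamma> e \<in> vec.span {q}"
      using ga(4) gb(4) by (auto simp: L_def vec.span_zero)
    show "\<forall>l'\<in>Q. \<exists>V. vec.dim V \<le> 2 \<and> L ` l' \<subseteq> V"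
    proof
      fix l' assume l': "l' \<in> Q"
      then have "l' = la \<or> l' = lb \<or> l' = lc" using Q by auto
      then show "\<exists>V. vec.dim V \<le> 2 \<and> L ` l' \<subseteq> V"
      proof (elim disjE)
        assume l'a: "l' = la"
        have "L ` l' \<subseteq> (\<lambda>x. x + ga x) ` H"
        proof
          fix y assume "y \<in> L ` l'"
          then obtain e where e: "e \<in> la" "y = L e" using l'a by auto
          have "\<gamma> e \<in> H" using e Q gH by auto
          then show "y \<in> (\<lambda>x. x + ga x) ` H" using e by (auto simp: L_def)
        qed
        then show ?thesis using T_dim[OF ga(1)] by blast
      next
        assume l'b: "l' = lb"
        have "L ` l' \<subseteq> (\<lambda>x. x + gb x) ` H"
        proof
          fix y assume "y \<in> L ` l'"
          then obtain e where e: "e \<in> lb" "y = L e" using l'b by auto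
          have eH: "\<gamma> e \<in> H" using e Q gH by auto
          show "y \<in> (\<lambda>x. x + gb x) ` H"
          proof (cases "e \<in> la")
            case True
            then have "e = pab" using iab e by auto
            then have "y = \<gamma> e + gb (\<gamma> e)" using e Lab gb(3) by simp
            then show ?thesis using eH by blast
          next
            case False then show ?thesis using e eH by (auto simp: L_def)
          qed
        qed
        then show ?thesis using T_dim[OF gb(1)] by blast
      next
        assume l'c: "l' = lc"
        have "L ` l' \<subseteq> H"
        proof
          fix y assume "y \<in> L ` l'"
          then obtain e where e: "e \<in> lc" "y = L e" using l'c by auto
          have eH: "\<gamma> e \<in> H" using e Q gH by auto
          show "y \<in> H"
          proof (cases "e \<in> la")
            case True
            then have "e = pac" using iac e by auto
            then show ?thesis using e Lac eH by simp
          next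
            case False
            show ?thesis
            proof (cases "e \<in> lb")
              case True
              then have "e = pbc" using ibc e by auto
              then show ?thesis using e Lbc eH by simp
            next
              case False2: False
              then show ?thesis using e eH False by (simp add: L_def)
            qed
          qed
        qed
        then show ?thesis using Hdim by (intro exI[of _ H]) simp
      qed
    qed
    show "q \<in> vec.span (L ` E)"
    proof -
      have EQ: "pab \<in> E" "pac \<in> E" "pbc \<in> E" using mem Q by auto
      have "{?v, ?w} \<subseteq> L ` E" using EQ Lac Lbc by (metis empty_subsetI image_eqI insert_subset)
      then have "vec.span {?v, ?w} \<subseteq> vec.span (L ` E)" by (rule vec.span_mono)
      moreover have "?u \<in> H" using gH EQ by auto
      ultimately have a: "?u \<in> vec.span (L ` E)" using s3 by auto
      have b: "L pab \<in> vec.span (L ` E)" using EQ by (intro vec.span_base imageI)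
      have "L pab - ?u \<in> vec.span (L ` E)" by (rule vec.span_diff[OF b a])
      then show ?thesis using Lab by simp
    qed
  qed
qed

end

lemma Lline_inter:
  assumes "i \<noteq> j" "i \<in> {1..n}" "j \<in> {1..n}"
  shows "Lline n i \<inter> Lline n j = {{i,j}}"
  using assms by (auto simp: Lline_def doubleton_eq_iff insert_commute)

lemma Lline_finite: "finite (Lline n i)"
proof -
  have "Lline n i = (\<lambda>j. {i,j}) ` ({1..n} - {i})" by (auto simp: Lline_def)
  then show ?thesis by simp
qed

lemma two_elems:
  assumes "finite A" "2 \<le> card A"
  obtains x y where "x \<in> A" "y \<in> A" "x \<noteq> y"
proof -
  have "\<not> card A \<le> Suc 0" using assms by simp
  then show ?thesis using card_le_Suc0_iff_eq[OF assms(1)] that by blast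
qed

lemma Lline_inj:
  assumes "3 \<le> n" "i \<noteq> j" "i \<in> {1..n}" "j \<in> {1..n}"
  shows "Lline n i \<noteq> Lline n j"
proof
  assume eq: "Lline n i = Lline n j"
  have "card ({1..n} - {i,j}) \<ge> 1"
  proof -
    have "card {1..n} - card {i,j} \<le> card ({1..n} - {i,j})" by (rule diff_card_le_card_Diff) simp
    moreover have "card {i,j} \<le> 2" by (simp add: card_insert_le_m1)
    ultimately show ?thesis using assms(1) by simp
  qed
  then obtain k where k: "k \<in> {1..n}" "k \<noteq> i" "k \<noteq> j"
    by (metis DiffE card_0_eq finite_Diff finite_atLeastAtMost insertCI not_one_le_zero ex_in_conv)
  have "{i,k} \<in> Lline n i" using k by (intro pair_in_Lline) auto
  then have "{i,k} \<in> Lline n i \<inter> Lline n j" using eq by simp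
  then show False using Lline_inter[OF assms(2-4)] k assms(2) by (auto simp: doubleton_eq_iff)
qed

lemma FF_mem:
  assumes "i \<in> I" "j \<in> {1..n}" "j \<notin> I"
  shows "{i,j} \<in> FF (Lline n ` I) (Lline n i)"
proof -
  have ij: "i \<noteq> j" using assms by auto
  have "{i,j} \<in> Lline n i" using assms ij by (intro pair_in_Lline) auto
  moreover have "{i,j} \<notin> Lline n k" if "k \<in> I" "Lline n k \<noteq> Lline n i" for k
  proof
    assume "{i,j} \<in> Lline n k"
    then obtain j' where "{i,j} = {k,j'}" by (auto simp: Lline_def)
    then have "k = i \<or> k = j" by (auto simp: doubleton_eq_iff)
    then show False using that assms by auto
  qed
  ultimately show ?thesis unfolding FF_def by blast
qed

lemma nonFF_sub:
  assumes "i \<in> I" "I \<subseteq> {1..n}"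
  shows "Lline n i - FF (Lline n ` I) (Lline n i) \<subseteq> {{i,k} | k. k \<in> I \<and> k \<noteq> i}"
proof
  fix e assume e: "e \<in> Lline n i - FF (Lline n ` I) (Lline n i)"
  then obtain k where k: "k \<in> I" "Lline n k \<noteq> Lline n i" "e \<in> Lline n k" "e \<in> Lline n i"
    unfolding FF_def by blast
  have ki: "k \<noteq> i" using k by auto
  have "e \<in> Lline n i \<inter> Lline n k" using k by simp
  moreover have "i \<in> {1..n}" "k \<in> {1..n}" using k(1) assms by auto
  ultimately have "e = {i,k}" using Lline_inter[OF ki[symmetric], of n] by blast
  then show "e \<in> {{i,k} | k. k \<in> I \<and> k \<noteq> i}" using k ki by blast
qed

lemma free_pair:
  assumes "I \<subseteq> {1..n}" "card I + 2 \<le> n" "finite I"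
  obtains j1 j2 where "j1 \<in> {1..n}" "j2 \<in> {1..n}" "j1 \<notin> I" "j2 \<notin> I" "j1 \<noteq> j2"
proof -
  have "card {1..n} - card I \<le> card ({1..n} - I)" by (rule diff_card_le_card_Diff[OF assms(3)])
  then have "2 \<le> card ({1..n} - I)" using assms(2) by simp
  then obtain x y where "x \<in> {1..n} - I" "y \<in> {1..n} - I" "x \<noteq> y" by (rule two_elems[rotated]) (use \<open>2 \<le> card ({1..n} - I)\<close> in simp_all)
  then show ?thesis using that by blast
qed

lemma liftable_2:
  assumes n: "4 \<le> n" "a \<in> {1..n}" "b \<in> {1..n}" "a \<noteq> b"
  shows "liftable (LnQ_ground (Lline n ` {a,b})) (LnQ_dependent (Lline n ` {a,b}))"
  unfolding liftable_def LnQ_ground_def LnQ_dependent_def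
proof (intro allI impI)
  let ?Q = "Lline n ` {a,b}"
  fix \<gamma> :: "nat set \<Rightarrow> cvec" and H q
  assume Hp: "is_plane H" and Hs: "vec.span (\<gamma> ` \<Union>?Q) = H" and qH: "q \<notin> H"
  have fin: "finite (\<Union>?Q)" using Lline_finite by auto
  interpret liftsetup ?Q \<gamma> H q using fin Hp Hs qH by unfold_locales
  obtain j1 j2 where j: "j1 \<in> {1..n}" "j2 \<in> {1..n}" "j1 \<notin> {a,b}" "j2 \<notin> {a,b}" "j1 \<noteq> j2"
    by (rule free_pair[of "{a,b}" n]) (use n in \<open>auto simp: card_insert_le_m1\<close>)
  have l: "Lline n a \<in> ?Q" "Lline n b \<in> ?Q" by auto
  have neq: "Lline n b \<noteq> Lline n a" using Lline_inj[of n b a] n by auto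
  have fa: "{a,j1} \<in> FF ?Q (Lline n a)" "{a,j2} \<in> FF ?Q (Lline n a)"
    using FF_mem[of a "{a,b}" j1 n] FF_mem[of a "{a,b}" j2 n] j by auto
  have fb: "{b,j1} \<in> FF ?Q (Lline n b)" "{b,j2} \<in> FF ?Q (Lline n b)"
    using FF_mem[of b "{a,b}" j1 n] FF_mem[of b "{a,b}" j2 n] j by auto
  have ne: "{a,j1} \<noteq> {a,j2}" "{b,j1} \<noteq> {b,j2}" using j by (auto simp: doubleton_eq_iff)
  have "Lline n a - FF ?Q (Lline n a) \<subseteq> {{a,k} | k. k \<in> {a,b} \<and> k \<noteq> a}"
    by (rule nonFF_sub) (use n in auto)
  also have "\<dots> = {{a,b}}" using n by auto
  finally have "\<gamma> ` (Lline n a - FF ?Q (Lline n a)) \<subseteq> vec.span {\<gamma> {a,b}}"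
    using vec.span_base[of "\<gamma> {a,b}" "{\<gamma> {a,b}}"] by auto
  then have "WIT ?Q \<gamma> q"
    by (rule LINE2[OF l(1) fa ne(1) l(2) neq fb ne(2)])
  then show "\<exists>z. (\<lambda>e. \<gamma> e + z e *s q) \<in> circuit_variety (\<Union>?Q) (paving3_dependent (\<Union>?Q) ?Q) \<and>
            \<not> (\<exists>H'. is_plane H' \<and> (\<lambda>e. \<gamma> e + z e *s q) ` (\<Union>?Q) \<subseteq> H')"
    unfolding WIT_def .
qed

lemma liftable_3:
  assumes n: "5 \<le> n" "a \<in> {1..n}" "b \<in> {1..n}" "c \<in> {1..n}" and d: "a \<noteq> b" "a \<noteq> c" "b \<noteq> c"
  shows "liftable (LnQ_ground (Lline n ` {a,b,c})) (LnQ_dependent (Lline n ` {a,b,c}))"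
  unfolding liftable_def LnQ_ground_def LnQ_dependent_def
proof (intro allI impI)
  let ?Q = "Lline n ` {a,b,c}"
  fix \<gamma> :: "nat set \<Rightarrow> cvec" and H q
  assume Hp: "is_plane H" and Hs: "vec.span (\<gamma> ` \<Union>?Q) = H" and qH: "q \<notin> H"
  have fin: "finite (\<Union>?Q)" using Lline_finite by auto
  interpret liftsetup ?Q \<gamma> H q using fin Hp Hs qH by unfold_locales
  have c3: "card {a,b,c} \<le> 3" by (simp add: card_insert_le_m1)
  obtain j1 j2 where j: "j1 \<in> {1..n}" "j2 \<in> {1..n}" "j1 \<notin> {a,b,c}" "j2 \<notin> {a,b,c}" "j1 \<noteq> j2"
    by (rule free_pair[of "{a,b,c}" n]) (use n c3 in auto)
  have l: "Lline n a \<in> ?Q" "Lline n b \<in> ?Q" "Lline n c \<in> ?Q" by auto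
  have neq: "Lline n b \<noteq> Lline n a" "Lline n c \<noteq> Lline n a" "Lline n a \<noteq> Lline n b"
    "Lline n c \<noteq> Lline n b" "Lline n a \<noteq> Lline n c" "Lline n b \<noteq> Lline n c"
    using Lline_inj[of n] n d by auto
  have fr: "{i,j1} \<in> FF ?Q (Lline n i)" "{i,j2} \<in> FF ?Q (Lline n i)" if "i \<in> {a,b,c}" for i
    using FF_mem[of i "{a,b,c}" j1 n] FF_mem[of i "{a,b,c}" j2 n] j that by auto
  have ne: "{i,j1} \<noteq> {i,j2}" for i using j by (auto simp: doubleton_eq_iff)
  have nf: "Lline n i - FF ?Q (Lline n i) \<subseteq> {{i,k} | k. k \<in> {a,b,c} \<and> k \<noteq> i}" if "i \<in> {a,b,c}" for i
    by (rule nonFF_sub) (use n that in auto)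
  have nfa: "Lline n a - FF ?Q (Lline n a) \<subseteq> {{a,b},{a,c}}" using nf[of a] by auto
  have nfb: "Lline n b - FF ?Q (Lline n b) \<subseteq> {{a,b},{b,c}}" using nf[of b] by (auto simp: insert_commute)
  have nfc: "Lline n c - FF ?Q (Lline n c) \<subseteq> {{a,c},{b,c}}" using nf[of c] by (auto simp: insert_commute)
  have pts: "{a,b} \<in> \<Union>?Q" "{a,c} \<in> \<Union>?Q" "{b,c} \<in> \<Union>?Q"
    using n d by (auto intro!: pair_in_Lline bexI[of _ a] bexI[of _ b])
  have uH: "\<gamma> {a,b} \<in> H" "\<gamma> {a,c} \<in> H" "\<gamma> {b,c} \<in> H" using gH pts by auto
  have case_line: "WIT ?Q \<gamma> q"
    if hyp: "i \<in> {a,b,c}" "i' \<in> {a,b,c}" "i \<noteq> i'" "Lline n i - FF ?Q (Lline n i) \<subseteq> {p1, p2}"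
       "\<gamma> p1 \<in> H" "\<gamma> p2 \<in> H" "vec.span {\<gamma> p1, \<gamma> p2} \<noteq> H" for i i' p1 p2
  proof -
    have "{\<gamma> p1, \<gamma> p2} \<subseteq> H" using hyp by auto
    then have sub: "vec.span {\<gamma> p1, \<gamma> p2} \<subseteq> H" by (rule vec.span_minimal[OF _ Hsub])
    obtain m0 where m0: "{\<gamma> p1, \<gamma> p2} \<subseteq> vec.span {m0}" by (rule D1[OF sub hyp(7)])
    have "\<gamma> ` (Lline n i - FF ?Q (Lline n i)) \<subseteq> vec.span {m0}" using m0 hyp(4) by blast
    moreover have "Lline n i' \<noteq> Lline n i" using Lline_inj[of n i' i] n hyp by auto
    ultimately show ?thesis
      using LINE2[of "Lline n i" "{i,j1}" "{i,j2}" "Lline n i'" "{i',j1}" "{i',j2}" m0]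
        fr[OF hyp(1)] fr[OF hyp(2)] ne hyp(1,2) by auto
  qed
  have "WIT ?Q \<gamma> q"
  proof (cases "vec.span {\<gamma> {a,b}, \<gamma> {a,c}} = H")
    case False then show ?thesis using case_line[of a b] nfa uH d by auto
  next
    case s1: True
    show ?thesis
    proof (cases "vec.span {\<gamma> {a,b}, \<gamma> {b,c}} = H")
      case False then show ?thesis using case_line[of b a] nfb uH d by auto
    next
      case s2: True
      show ?thesis
      proof (cases "vec.span {\<gamma> {a,c}, \<gamma> {b,c}} = H")
        case False then show ?thesis using case_line[of c a] nfc uH d by auto
      next
        case s3: True
        show ?thesis
        proof (rule T3[OF _ _ _ _ _ s1 s2 s3])
          show "?Q = {Lline n a, Lline n b, Lline n c}" by simp
          show "Lline n a \<inter> Lline n b = {{a,b}}" using Lline_inter n d by auto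
          show "Lline n a \<inter> Lline n c = {{a,c}}" using Lline_inter n d by auto
          show "Lline n b \<inter> Lline n c = {{b,c}}" using Lline_inter n d by auto
          show "{b,c} \<notin> Lline n a" using d by (auto simp: Lline_def doubleton_eq_iff)
        qed
      qed
    qed
  qed
  then show "\<exists>z. (\<lambda>e. \<gamma> e + z e *s q) \<in> circuit_variety (\<Union>?Q) (paving3_dependent (\<Union>?Q) ?Q) \<and>
            \<not> (\<exists>H'. is_plane H' \<and> (\<lambda>e. \<gamma> e + z e *s q) ` (\<Union>?Q) \<subseteq> H')"
    unfolding WIT_def .
qed

lemma Q_repr:
  assumes "Q \<subseteq> Llines n"
  shows "Q = Lline n ` {i \<in> {1..n}. Lline n i \<in> Q}"
  using assms unfolding Llines_def by auto

lemma card_repr: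
  assumes "3 \<le> n" "I \<subseteq> {1..n}"
  shows "card (Lline n ` I) = card I"
proof -
  have "inj_on (Lline n) I"
    unfolding inj_on_def using Lline_inj[OF assms(1)] assms(2) by blast
  then show ?thesis by (rule card_image)
qed

lemma cond_ii:
  assumes n: "3 \<le> n" and I: "I \<subseteq> {1..n}"
  shows "(\<exists>l\<in>Llines n. l \<notin> Lline n ` I \<and> l \<subseteq> \<Union>(Lline n ` I)) \<longleftrightarrow> card I = n - 1"
proof
  assume "\<exists>l\<in>Llines n. l \<notin> Lline n ` I \<and> l \<subseteq> \<Union>(Lline n ` I)"
  then obtain m where m: "m \<in> {1..n}" "Lline n m \<notin> Lline n ` I" "Lline n m \<subseteq> \<Union>(Lline n ` I)"
    unfolding Llines_def by blast
  have mI: "m \<notin> I" using m(2) by auto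
  have "{1..n} - {m} \<subseteq> I"
  proof
    fix j assume j: "j \<in> {1..n} - {m}"
    then have "{m,j} \<in> Lline n m" by (intro pair_in_Lline) auto
    then obtain i where i: "i \<in> I" "{m,j} \<in> Lline n i" using m(3) by blast
    then obtain j' where "{m,j} = {i,j'}" by (auto simp: Lline_def)
    then have "i = m \<or> i = j" by (auto simp: doubleton_eq_iff)
    then show "j \<in> I" using i mI by auto
  qed
  moreover have "I \<subseteq> {1..n} - {m}" using I mI by auto
  ultimately have "I = {1..n} - {m}" by blast
  then show "card I = n - 1" using m(1) by simp
next
  assume c: "card I = n - 1"
  have "I \<noteq> {1..n}" using c n by auto
  then obtain m where m: "m \<in> {1..n}" "m \<notin> I" using I by blast
  have sub: "I \<subseteq> {1..n} - {m}" using I m by auto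
  have "card ({1..n} - {m}) = n - 1" using m by simp
  then have Ieq: "I = {1..n} - {m}" using card_subset_eq[OF _ sub] c by simp
  have "Lline n m \<notin> Lline n ` I"
  proof
    assume "Lline n m \<in> Lline n ` I"
    then obtain i where "i \<in> I" "Lline n m = Lline n i" by auto
    moreover then have "m \<noteq> i" "i \<in> {1..n}" using m I by auto
    ultimately show False using Lline_inj[OF n, of m i] m(1) by blast
  qed
  moreover have "Lline n m \<subseteq> \<Union>(Lline n ` I)"
  proof
    fix e assume "e \<in> Lline n m"
    then obtain j where j: "e = {m,j}" "j \<in> {1..n}" "j \<noteq> m" by (auto simp: Lline_def)
    have "{j,m} \<in> Lline n j" using m j by (intro pair_in_Lline) auto
    then have "e \<in> Lline n j" using j(1) by (simp add: insert_commute)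
    then show "e \<in> \<Union>(Lline n ` I)" using j Ieq by auto
  qed
  moreover have "Lline n m \<in> Llines n" using m unfolding Llines_def by auto
  ultimately show "\<exists>l\<in>Llines n. l \<notin> Lline n ` I \<and> l \<subseteq> \<Union>(Lline n ` I)" by blast
qed

lemma four_elems:
  assumes "finite I" "4 \<le> card I"
  obtains a b c d where "a \<in> I" "b \<in> I" "c \<in> I" "d \<in> I" "distinct [a,b,c,d]"
proof -
  obtain a where a: "a \<in> I" using assms by fastforce
  have c1: "3 \<le> card (I - {a})" using assms a by simp
  have "I - {a} \<noteq> {}" using c1 by (metis card.empty not_numeral_le_zero not_one_le_zero)
  then obtain b where b: "b \<in> I - {a}" by blast
  have c2: "2 \<le> card (I - {a} - {b})" using c1 b assms by simp
  have "I - {a} - {b} \<noteq> {}" using c2 by (metis card.empty not_numeral_le_zero not_one_le_zero)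
  then obtain c where c: "c \<in> I - {a} - {b}" by blast
  have c3: "1 \<le> card (I - {a} - {b} - {c})" using c2 c assms by simp
  have "I - {a} - {b} - {c} \<noteq> {}" using c3 by (metis card.empty not_numeral_le_zero not_one_le_zero)
  then obtain d where d: "d \<in> I - {a} - {b} - {c}" by blast
  show ?thesis using that a b c d by auto
qed

theorem lemma6p4:
  fixes n :: nat and \<Q> :: "nat set set set set"
  assumes "n \<ge> 4"
    and "partition_on (Llines n) \<Q>"
  shows "nice n \<Q> \<longleftrightarrow> (\<forall>Q\<in>\<Q>. card Q \<notin> {2, 3, n - 1})"
proof -
  have n3: "3 \<le> n" using assms(1) by simp
  have QL: "Q \<subseteq> Llines n" if "Q \<in> \<Q>" for Q
    using assms(2) that unfolding partition_on_def by blast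
  define IQ where "IQ Q = {i \<in> {1..n}. Lline n i \<in> Q}" for Q
  have IQs: "IQ Q \<subseteq> {1..n}" for Q by (auto simp: IQ_def)
  have Qr: "Q = Lline n ` IQ Q" if "Q \<in> \<Q>" for Q
    unfolding IQ_def by (rule Q_repr[OF QL[OF that]])
  have cQ: "card Q = card (IQ Q)" if "Q \<in> \<Q>" for Q
    using Qr[OF that] card_repr[OF n3 IQs] by metis
  have finI: "finite (IQ Q)" for Q using IQs[of Q] finite_subset by blast
  show ?thesis
  proof
    assume nice: "nice n \<Q>"
    show "\<forall>Q\<in>\<Q>. card Q \<notin> {2, 3, n - 1}"
    proof (intro ballI notI)
      fix Q assume Q: "Q \<in> \<Q>" and cQs: "card Q \<in> {2, 3, n - 1}"
      have ni: "\<not> liftable (LnQ_ground Q) (LnQ_dependent Q)" if "card Q \<ge> 2"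
        using nice Q that unfolding nice_def by blast
      have nii: "\<not> (\<exists>l\<in>Llines n. l \<notin> Q \<and> l \<subseteq> \<Union>Q)"
        using nice Q unfolding nice_def by blast
      show False
      proof (cases "card Q = n - 1")
        case True
        then have "card (IQ Q) = n - 1" using cQ[OF Q] by simp
        then have "\<exists>l\<in>Llines n. l \<notin> Lline n ` IQ Q \<and> l \<subseteq> \<Union>(Lline n ` IQ Q)"
          using cond_ii[OF n3 IQs] by blast
        then show False using nii Qr[OF Q] by simp
      next
        case False
        then have c23: "card (IQ Q) = 2 \<or> card (IQ Q) = 3" using cQs cQ[OF Q] by auto
        then show False
        proof
          assume c2: "card (IQ Q) = 2"
          then obtain a b where ab: "IQ Q = {a,b}" "a \<noteq> b" by (meson card_2_iff)
          have "liftable (LnQ_ground Q) (LnQ_dependent Q)"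
            using liftable_2[of n a b] ab IQs[of Q] assms(1) Qr[OF Q] by auto
          then show False using ni cQ[OF Q] c2 by simp
        next
          assume c3: "card (IQ Q) = 3"
          then have "n \<noteq> 4" using False cQ[OF Q] by auto
          then have n5: "5 \<le> n" using assms(1) by simp
          obtain a b c where abc: "IQ Q = {a,b,c}" "a \<noteq> b" "a \<noteq> c" "b \<noteq> c"
            using c3 by (meson card_3_iff)
          have "liftable (LnQ_ground Q) (LnQ_dependent Q)"
            using liftable_3[of n a b c] abc IQs[of Q] n5 Qr[OF Q] by auto
          then show False using ni cQ[OF Q] c3 by simp
        qed
      qed
    qed
  next
    assume cards: "\<forall>Q\<in>\<Q>. card Q \<notin> {2, 3, n - 1}"
    show "nice n \<Q>"
      unfolding nice_def
    proof (intro conjI ballI impI notI)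
      fix Q assume Q: "Q \<in> \<Q>" and c2: "2 \<le> card Q" and lift: "liftable (LnQ_ground Q) (LnQ_dependent Q)"
      have "card Q \<noteq> 2" "card Q \<noteq> 3" using cards Q by auto
      then have "4 \<le> card (IQ Q)" using c2 cQ[OF Q] by linarith
      then obtain a b c d where abcd: "a \<in> IQ Q" "b \<in> IQ Q" "c \<in> IQ Q" "d \<in> IQ Q" "distinct [a,b,c,d]"
        using four_elems finI by blast
      have "\<not> liftable (LnQ_ground (Lline n ` IQ Q)) (LnQ_dependent (Lline n ` IQ Q))"
        by (rule not_liftable_ge4[OF IQs abcd])
      then show False using lift Qr[OF Q] by simp
    next
      assume "\<exists>Q\<in>\<Q>. \<exists>l\<in>Llines n. l \<notin> Q \<and> l \<subseteq> \<Union>Q"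
      then obtain Q where Q: "Q \<in> \<Q>" and ex: "\<exists>l\<in>Llines n. l \<notin> Q \<and> l \<subseteq> \<Union>Q" by blast
      have "card (IQ Q) = n - 1" using cond_ii[OF n3 IQs, of Q] ex Qr[OF Q] by simp
      then show False using cards Q cQ[OF Q] by auto
    qed
  qed
qed


end
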